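(* Let $(p_n)$ be a sequence in $(0,1)$ such that $\lim_{n\to\infty} p_n\log n=\alpha$ exists, let $L$ and $k$ be positive integers, and let $q_{k,n}=\Pr\left(\frac{k-1}{L}\le \frac{N_1}{\log n}<\frac{k}{L}\right)$ where $N_1\sim\mathrm{Geometric}(p_n)$. Let $\mathcal Y_k$ be the collection of output fragments $\vec Y_i$ of the torn-paper channel (block length $n$, tearing probability $p_n$) whose underlying fragment length $N_{\pi_i}$ satisfies $\frac{k-1}{L}\log n\le N_{\pi_i}<\frac{k}{L}\log n$, and let $|\mathcal Y_k|$ be the number of such fragments. Then for any $\epsilon>0$ and all $n$ large enough, $$\Pr\left(\big||\mathcal Y_k| - n p_n q_{k,n}\big| > \epsilon n p_n\right)\le 4e^{-n p_n^2\epsilon^2/4}.$$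
   Context: Logarithms are base 2. The torn-paper channel with block length $n$ and tearing probability $p_n$: the input $X^n\in\{0,1\}^n$ is cut into consecutive fragments $\vec X_1,\dots,\vec X_K$, where $N_1,N_2,\dots$ are i.i.d. $\mathrm{Geometric}(p_n)$ (support $\{1,2,\dots\}$, mean $1/p_n$), $K$ is the smallest index with $\sum_{i=1}^K N_i\ge n$, $\vec X_i$ consists of positions $1+\sum_{j<i}N_j$ through $\sum_{j\le i}N_j$ for $i<K$, and $\vec X_K$ of positions $1+\sum_{j<K}N_j$ through $n$ (equivalently, a cut is placed independently between each pair of consecutive bits with probability $p_n$, so $K=1+\sum_{i=2}^n T_i$ with $T_i$ i.i.d. $\mathrm{Bernoulli}(p_n)$). Given $K$, $\pi$ is a uniformly random permutation of $\{1,\dots,K\}$ and the output is the unordered collection $\{\vec Y_1,\dots,\vec Y_K\}$ with $\vec Y_i=\vec X_{\pi_i}$. *)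

theory Defs
  imports "HOL-Probability.Probability"
begin

definition geom1 :: "real \<Rightarrow> nat pmf" where
  "geom1 p = map_pmf Suc (geometric_pmf p)"

text \<open>Joint law of the fragment lengths N_1..N_n (stored 0-indexed as N 0 .. N (n-1)),
  i.i.d. geom1 (p n). Since every N_i \<ge> 1, K \<le> n, so only these matter.\<close>
definition frag_lengths :: "nat \<Rightarrow> real \<Rightarrow> (nat \<Rightarrow> nat) pmf" where
  "frag_lengths n p = Pi_pmf {..<n} 1 (\<lambda>_. geom1 p)"

definition tp_K :: "nat \<Rightarrow> (nat \<Rightarrow> nat) \<Rightarrow> nat" where
  "tp_K n N = (LEAST K. real n \<le> (\<Sum>i<K. real (N i)))"

text \<open>|Y_k|: number of fragments (among the K) whose underlying length N lies in
  [(k-1)/L log n, k/L log n). The permutation pi does not affect this count.\<close>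
definition count_Yk :: "nat \<Rightarrow> nat \<Rightarrow> nat \<Rightarrow> (nat \<Rightarrow> nat) \<Rightarrow> nat" where
  "count_Yk n L k N = card {i. i < tp_K n N \<and>
      (real k - 1) / real L * log 2 (real n) \<le> real (N i) \<and>
      real (N i) < real k / real L * log 2 (real n)}"

definition q_kn :: "nat \<Rightarrow> nat \<Rightarrow> nat \<Rightarrow> real \<Rightarrow> real" where
  "q_kn L k n p = measure_pmf.prob (geom1 p)
     {m. (real k - 1) / real L \<le> real m / log 2 (real n) \<and>
         real m / log 2 (real n) < real k / real L}"

end

theory Submission
  imports Defs
begin

lemma geom1_gf:
  assumes "0 < p" "p < 1" "0 \<le> z" "(1-p)*z < 1"
  shows "(\<integral>\<^sup>+v. ennreal (z^v) \<partial>measure_pmf (geom1 p)) = ennreal (p*z/(1-(1-p)*z))"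
proof -
  have s: "(\<lambda>k. (p*z) * ((1-p)*z)^k) sums ((p*z) * (1/(1-(1-p)*z)))"
  proof -
    have nn: "0 \<le> (1-p)*z" using assms by simp
    have "\<bar>(1-p)*z\<bar> < 1" using nn assms(4) by (simp only: abs_of_nonneg)
    then show ?thesis by (intro sums_mult geometric_sums) simp
  qed
  have eq: "\<And>k. ennreal (pmf (geometric_pmf p) k) * ennreal (z ^ Suc k) = ennreal ((p*z) * ((1-p)*z)^k)"
    using assms by (simp add: ennreal_mult'[symmetric] power_mult_distrib mult_ac)
  have "(\<integral>\<^sup>+v. ennreal (z^v) \<partial>measure_pmf (geom1 p)) = (\<integral>\<^sup>+k. ennreal (z^Suc k) \<partial>measure_pmf (geometric_pmf p))"
    unfolding geom1_def by (rule nn_integral_map_pmf)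
  also have "\<dots> = (\<integral>\<^sup>+k. ennreal (pmf (geometric_pmf p) k) * ennreal (z^Suc k) \<partial>count_space UNIV)"
    by (rule nn_integral_measure_pmf)
  also have "\<dots> = (\<Sum>k. ennreal (pmf (geometric_pmf p) k) * ennreal (z^Suc k))"
    by (rule nn_integral_count_space_nat)
  also have "\<dots> = (\<Sum>k. ennreal ((p*z) * ((1-p)*z)^k))"
    by (simp only: eq)
  also have "\<dots> = ennreal ((p*z) * (1/(1-(1-p)*z)))"
    using s assms by (intro suminf_ennreal_eq) (auto intro!: mult_nonneg_nonneg zero_le_power)
  finally show ?thesis by simp
qed

lemma ind_gf:
  fixes M :: "'a pmf"
  assumes "0 \<le> w"
  shows "(\<integral>\<^sup>+v. ennreal (if P v then w else 1) \<partial>measure_pmf M)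
     = ennreal (1 - measure_pmf.prob M {v. P v} + measure_pmf.prob M {v. P v} * w)"
proof -
  let ?A = "{v. P v}"
  let ?q = "measure_pmf.prob M ?A"
  have "(\<integral>\<^sup>+v. ennreal (if P v then w else 1) \<partial>measure_pmf M)
      = (\<integral>\<^sup>+v. ennreal w * indicator ?A v + indicator (- ?A) v \<partial>measure_pmf M)"
    by (intro nn_integral_cong) (auto simp: indicator_def)
  also have "\<dots> = (\<integral>\<^sup>+v. ennreal w * indicator ?A v \<partial>measure_pmf M) + (\<integral>\<^sup>+v. indicator (- ?A) v \<partial>measure_pmf M)"
    by (rule nn_integral_add) auto
  also have "(\<integral>\<^sup>+v. ennreal w * indicator ?A v \<partial>measure_pmf M) = ennreal w * emeasure M ?A"
    by (rule nn_integral_cmult_indicator) auto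
  also have "(\<integral>\<^sup>+v. indicator (- ?A) v \<partial>measure_pmf M) = emeasure M (- ?A)"
    by (rule nn_integral_indicator) auto
  also have "emeasure M ?A = ennreal ?q" by (rule measure_pmf.emeasure_eq_measure)
  also have "emeasure M (- ?A) = ennreal (measure_pmf.prob M (- ?A))" by (rule measure_pmf.emeasure_eq_measure)
  also have "measure_pmf.prob M (- ?A) = 1 - ?q"
  proof -
    have "measure_pmf.prob M (space (measure_pmf M) - ?A) = 1 - ?q"
      by (rule measure_pmf.prob_compl) simp
    moreover have "space (measure_pmf M) - ?A = - ?A" by auto
    ultimately show ?thesis by simp
  qed
  also have "ennreal w * ennreal ?q + ennreal (1 - ?q) = ennreal (w * ?q + (1 - ?q))"
  proof -
    have "0 \<le> ?q" "?q \<le> 1" by auto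
    then show ?thesis using assms by (simp add: ennreal_mult ennreal_plus)
  qed
  finally show ?thesis by (simp add: algebra_simps)
qed

lemma markov_prod:
  fixes f :: "nat \<Rightarrow> real"
  assumes "m \<le> n" "\<And>v. 0 \<le> f v" "c > 0"
    and a: "(\<integral>\<^sup>+v. ennreal (f v) \<partial>measure_pmf (geom1 p)) = ennreal a" "0 \<le> a"
  shows "measure_pmf.prob (frag_lengths n p) {N. c \<le> (\<Prod>i<m. f (N i))} \<le> a^m / c"
proof -
  let ?M = "frag_lengths n p"
  define F where "F i v = (if i < m then f v else 1)" for i v
  have F0: "0 \<le> F i v" for i v using assms(2) by (simp add: F_def)
  have pr: "(\<Prod>i<m. f (N i)) = (\<Prod>i<n. F i (N i))" for N
  proof -
    have "(\<Prod>i<n. F i (N i)) = (\<Prod>i\<in>{..<m} \<union> {m..<n}. F i (N i))"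
      using assms(1) by (intro prod.cong) auto
    also have "\<dots> = (\<Prod>i<m. F i (N i)) * (\<Prod>i\<in>{m..<n}. F i (N i))"
      by (intro prod.union_disjoint) auto
    also have "\<dots> = (\<Prod>i<m. f (N i))" by (simp add: F_def)
    finally show ?thesis by simp
  qed
  have "emeasure ?M {N\<in>UNIV. 1 \<le> ennreal (1/c) * ennreal (\<Prod>i<m. f (N i))}
      \<le> ennreal (1/c) * (\<integral>\<^sup>+N. ennreal (\<Prod>i<m. f (N i)) * indicator UNIV N \<partial>measure_pmf ?M)"
    by (rule nn_integral_Markov_inequality) auto
  also have "(\<integral>\<^sup>+N. ennreal (\<Prod>i<m. f (N i)) * indicator UNIV N \<partial>measure_pmf ?M)
      = (\<integral>\<^sup>+N. (\<Prod>i<n. ennreal (F i (N i))) \<partial>measure_pmf ?M)"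
    by (intro nn_integral_cong) (simp add: pr prod_ennreal F0)
  also have "\<dots> = (\<Prod>i<n. \<integral>\<^sup>+v. ennreal (F i v) \<partial>measure_pmf (geom1 p))"
    unfolding frag_lengths_def by (rule nn_integral_prod_Pi_pmf) auto
  also have "\<dots> = (\<Prod>i<n. ennreal (if i < m then a else 1))"
    by (intro prod.cong) (auto simp: F_def a)
  also have "\<dots> = ennreal (\<Prod>i<n. (if i < m then a else 1))"
    using a by (intro prod_ennreal) auto
  also have "(\<Prod>i<n. (if i < m then a else 1)) = a ^ m"
  proof -
    have "(\<Prod>i<n. (if i < m then a else 1)) = (\<Prod>i<m. a)"
      using assms(1) by (intro prod.mono_neutral_cong_right) auto
    then show ?thesis by simp
  qed
  finally have *: "emeasure ?M {N\<in>UNIV. 1 \<le> ennreal (1/c) * ennreal (\<Prod>i<m. f (N i))} \<le> ennreal (a^m / c)"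
    using assms(3) a by (simp add: ennreal_mult'[symmetric] divide_inverse mult.commute)
  have "{N\<in>UNIV. 1 \<le> ennreal (1/c) * ennreal (\<Prod>i<m. f (N i))} = {N. c \<le> (\<Prod>i<m. f (N i))}"
  proof -
    have "1 \<le> ennreal (1/c) * ennreal y \<longleftrightarrow> c \<le> y" for y
    proof (cases "y \<ge> 0")
      case True
      then show ?thesis using assms(3)
        by (simp add: ennreal_mult'[symmetric] field_simps flip: ennreal_1)
    next
      case False
      then show ?thesis using assms(3) by (simp add: ennreal_neg)
    qed
    then show ?thesis by auto
  qed
  with * have "emeasure ?M {N. c \<le> (\<Prod>i<m. f (N i))} \<le> ennreal (a^m / c)" by simp
  then show ?thesis using assms
    by (simp add: measure_pmf.emeasure_eq_measure)
qed

lemma prod_ind: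
  fixes w :: real and m :: nat
  shows "(\<Prod>i<m. (if P (N i) then w else 1)) = w ^ card {i. i<m \<and> P (N i)}"
proof -
  have "(\<Prod>i<m. (if P (N i) then w else 1)) = (\<Prod>i\<in>{..<m} \<inter> {i. P (N i)}. w) * (\<Prod>i\<in>{..<m} \<inter> - {i. P (N i)}. 1)"
    by (rule prod.If_cases) auto
  also have "\<dots> = w ^ card ({..<m} \<inter> {i. P (N i)})" by simp
  also have "{..<m} \<inter> {i. P (N i)} = {i. i<m \<and> P (N i)}" by auto
  finally show ?thesis .
qed

lemma tail_S_ge:
  assumes "0<p" "p<1" "m \<le> n" "1 < z" "(1-p)*z < 1"
  shows "measure_pmf.prob (frag_lengths n p) {N. n \<le> (\<Sum>i<m. N i)} \<le> (p*z/(1-(1-p)*z))^m / z^n"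
proof -
  have "measure_pmf.prob (frag_lengths n p) {N. n \<le> (\<Sum>i<m. N i)}
     \<le> measure_pmf.prob (frag_lengths n p) {N. z^n \<le> (\<Prod>i<m. z ^ N i)}"
    using assms(4) by (intro measure_pmf.finite_measure_mono) (auto simp: power_sum[symmetric] intro: power_increasing)
  also have "\<dots> \<le> (p*z/(1-(1-p)*z))^m / z^n"
    using assms by (intro markov_prod[where f="\<lambda>v. z^v"] geom1_gf) (auto intro!: divide_nonneg_pos)
  finally show ?thesis .
qed

lemma tail_S_lt:
  assumes "0<p" "p<1" "m \<le> n" "0 < z" "z < 1"
  shows "measure_pmf.prob (frag_lengths n p) {N. (\<Sum>i<m. N i) < n} \<le> (p*z/(1-(1-p)*z))^m / z^n"
proof -
  have "measure_pmf.prob (frag_lengths n p) {N. (\<Sum>i<m. N i) < n}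
     \<le> measure_pmf.prob (frag_lengths n p) {N. z^n \<le> (\<Prod>i<m. z ^ N i)}"
    using assms(4,5) by (intro measure_pmf.finite_measure_mono) (auto simp: power_sum[symmetric] intro: power_decreasing)
  also have "\<dots> \<le> (p*z/(1-(1-p)*z))^m / z^n"
  proof -
    have "(1-p)*z < 1*1" using assms by (intro mult_strict_mono) auto
    then show ?thesis
    using assms by (intro markov_prod[where f="\<lambda>v. z^v"] geom1_gf) (auto intro!: divide_nonneg_pos)
  qed
  finally show ?thesis .
qed

lemma tail_T_gt:
  assumes "m \<le> n" "1 \<le> w"
  shows "measure_pmf.prob (frag_lengths n p) {N. t < real (card {i. i<m \<and> P (N i)})}
    \<le> (1 - measure_pmf.prob (geom1 p) {v. P v} + measure_pmf.prob (geom1 p) {v. P v} * w)^m / w powr t"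
proof -
  let ?q = "measure_pmf.prob (geom1 p) {v. P v}"
  have "measure_pmf.prob (frag_lengths n p) {N. t < real (card {i. i<m \<and> P (N i)})}
     \<le> measure_pmf.prob (frag_lengths n p) {N. w powr t \<le> (\<Prod>i<m. (if P (N i) then w else 1))}"
  proof (intro measure_pmf.finite_measure_mono subsetI; clarsimp simp: prod_ind)
    fix N assume "t < real (card {i. i < m \<and> P (N i)})"
    hence "w powr t \<le> w powr real (card {i. i < m \<and> P (N i)})"
      using assms(2) by (intro powr_mono) auto
    thus "w powr t \<le> w ^ card {i. i < m \<and> P (N i)}" using assms(2) by (simp add: powr_realpow)
  qed
  also have "\<dots> \<le> (1 - ?q + ?q * w)^m / w powr t"
  proof -
    have "?q \<le> 1" by simp
    moreover have "0 \<le> ?q * w" using assms by simp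
    ultimately have "0 \<le> 1 - ?q + ?q * w" by linarith
    then show ?thesis
      using assms by (intro markov_prod[where f="\<lambda>v. if P v then w else 1"] ind_gf) auto
  qed
  finally show ?thesis .
qed

lemma tail_T_lt:
  assumes "m \<le> n" "0 < w" "w \<le> 1"
  shows "measure_pmf.prob (frag_lengths n p) {N. real (card {i. i<m \<and> P (N i)}) < t}
    \<le> (1 - measure_pmf.prob (geom1 p) {v. P v} + measure_pmf.prob (geom1 p) {v. P v} * w)^m / w powr t"
proof -
  let ?q = "measure_pmf.prob (geom1 p) {v. P v}"
  have "measure_pmf.prob (frag_lengths n p) {N. real (card {i. i<m \<and> P (N i)}) < t}
     \<le> measure_pmf.prob (frag_lengths n p) {N. w powr t \<le> (\<Prod>i<m. (if P (N i) then w else 1))}"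
  proof (intro measure_pmf.finite_measure_mono subsetI; clarsimp simp: prod_ind)
    fix N assume "real (card {i. i < m \<and> P (N i)}) < t"
    hence "w powr t \<le> w powr real (card {i. i < m \<and> P (N i)})"
      using assms(2,3) by (intro powr_mono') auto
    thus "w powr t \<le> w ^ card {i. i < m \<and> P (N i)}" using assms(2) by (simp add: powr_realpow)
  qed
  also have "\<dots> \<le> (1 - ?q + ?q * w)^m / w powr t"
  proof -
    have "?q \<le> 1" by simp
    moreover have "0 \<le> ?q * w" using assms by simp
    ultimately have "0 \<le> 1 - ?q + ?q * w" by linarith
    then show ?thesis
      using assms by (intro markov_prod[where f="\<lambda>v. if P v then w else 1"] ind_gf) auto
  qed
  finally show ?thesis .
qed


lemma anA:
  fixes p \<delta> :: real and m n :: nat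
  assumes p: "0<p" "p<1" and d: "0<\<delta>" "\<delta> \<le> 1/4" "p \<le> \<delta>^2/8"
    and m: "real m \<le> real n * p * (1-\<delta>)"
  shows "(p*(1+\<delta>/2*p)/(1-(1-p)*(1+\<delta>/2*p)))^m / (1+\<delta>/2*p)^n \<le> exp (- (real n*p) * \<delta>^2/8)"
proof -
  define g where "g = \<delta>/2"
  define z where "z = 1 + g*p"
  define L where "L = g*p + g/(1-g)"
  have g: "0 < g" "g \<le> 1/8" using d by (auto simp: g_def)
  have den: "1-(1-p)*z = p*(1-g+g*p)" by (simp add: z_def algebra_simps)
  have gp0: "0 \<le> g*p" using g p by simp
  have den2: "1-g+g*p > 0" using g gp0 by linarith
  have G: "p*z/(1-(1-p)*z) = z * (1/(1-g+g*p))"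
    using p den2 by (simp add: den)
  have z0: "z > 0" using g p by (simp add: z_def add_pos_nonneg)
  have "1/(1-g+g*p) \<le> 1/(1-g)"
    using g p den2 by (intro divide_left_mono) (auto intro: mult_nonneg_nonneg)
  also have "\<dots> = 1 + g/(1-g)" using g by (simp add: field_simps)
  also have "\<dots> \<le> exp (g/(1-g))" by simp
  finally have i1: "1/(1-g+g*p) \<le> exp (g/(1-g))" .
  have "z \<le> exp (g*p)" unfolding z_def by simp
  hence "p*z/(1-(1-p)*z) \<le> exp (g*p) * exp (g/(1-g))"
    unfolding G using i1 z0 den2 by (intro mult_mono) auto
  also have "\<dots> = exp L" by (simp add: L_def exp_add)
  finally have GL: "p*z/(1-(1-p)*z) \<le> exp L" .
  have G0: "0 \<le> p*z/(1-(1-p)*z)" unfolding G using z0 den2 by simp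
  have L0: "0 \<le> L" using g p by (simp add: L_def)
  have "(p*z/(1-(1-p)*z))^m \<le> (exp L)^m" by (intro power_mono GL G0)
  also have "\<dots> = exp (real m * L)" by (simp add: exp_of_nat_mult)
  also have "\<dots> \<le> exp (real n * p * (1-\<delta>) * L)"
    using m L0 by (intro iffD2[OF exp_le_cancel_iff] mult_right_mono) auto
  finally have num: "(p*z/(1-(1-p)*z))^m \<le> exp (real n * p * (1-\<delta>) * L)" .
  have gp: "0 \<le> g*p" "g*p \<le> 1" using g p by (auto simp: mult_le_one)
  have "g*p - (g*p)^2 \<le> ln z" unfolding z_def by (rule ln_one_plus_pos_lower_bound[OF gp])
  hence "exp (real n * (g*p - (g*p)^2)) \<le> exp (real n * ln z)"
    by (intro iffD2[OF exp_le_cancel_iff] mult_left_mono) auto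
  also have "\<dots> = z^n" using z0 by (simp add: exp_of_nat_mult)
  finally have zn: "exp (real n * (g*p - (g*p)^2)) \<le> z^n" .
  have "(p*z/(1-(1-p)*z))^m / z^n \<le> exp (real n * p * (1-\<delta>) * L) / exp (real n * (g*p - (g*p)^2))"
    using num zn G0 by (intro frac_le) auto
  also have "\<dots> = exp (real n * p * ((1-\<delta>) * L - g + g^2*p))"
    by (simp add: exp_diff[symmetric] algebra_simps power2_eq_square)
  also have "\<dots> \<le> exp (- (real n*p) * \<delta>^2/8)"
  proof -
    have a1: "(1-\<delta>)*(g/(1-g)) \<le> g - \<delta>^2/4"
    proof -
      have "(g - \<delta>^2/4)*(1-g) - (1-\<delta>)*g = \<delta>^3/8" by (simp add: g_def field_simps power2_eq_square power3_eq_cube)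
      moreover have "\<delta>^3/8 \<ge> 0" using d by simp
      ultimately have "(1-\<delta>)*g \<le> (g - \<delta>^2/4)*(1-g)" by linarith
      thus ?thesis using g by (simp add: field_simps)
    qed
    have a2: "(1-\<delta>)*(g*p) + g^2*p \<le> p"
    proof -
      have "(1-\<delta>)*g \<le> g" using g d by (intro mult_left_le_one_le) auto
      moreover have "g^2 \<le> g" using g unfolding power2_eq_square by (intro mult_left_le_one_le) auto
      ultimately have "(1-\<delta>)*g + g^2 \<le> 1" using g by linarith
      hence "((1-\<delta>)*g + g^2)*p \<le> 1*p" using p by (intro mult_right_mono) auto
      thus ?thesis by (simp add: algebra_simps)
    qed
    have "(1-\<delta>) * L - g + g^2*p \<le> - (\<delta>^2/8)"
      using a1 a2 d by (simp add: L_def algebra_simps)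
    hence "real n * p * ((1-\<delta>) * L - g + g^2*p) \<le> real n * p * (- (\<delta>^2/8))"
      using p by (intro mult_left_mono) auto
    thus ?thesis by simp
  qed
  finally show ?thesis by (simp add: z_def g_def)
qed


lemma anB:
  fixes p \<delta> :: real and m n :: nat
  assumes p: "0<p" "p<1" and d: "0<\<delta>" "\<delta> \<le> 1/4" "p \<le> 3*\<delta>^2/64"
    and m: "real n * p * (1+\<delta>) \<le> real m"
  shows "(p*(1-\<delta>/4*p)/(1-(1-p)*(1-\<delta>/4*p)))^m / (1-\<delta>/4*p)^n \<le> exp (- (real n*p) * \<delta>^2/8)"
proof -
  define g where "g = \<delta>/4"
  define z where "z = 1 - g*p"
  define L where "L = g - g*p - g^2"
  have g: "0 < g" "g \<le> 1/16" using d by (auto simp: g_def)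
  have gp0: "0 \<le> g*p" using g p by simp
  have "g*p \<le> g" using g p by (intro mult_left_le) auto
  hence gp1: "g*p \<le> 1/2" using g by linarith
  have z0: "z > 0" "z \<le> 1" using gp1 gp0 by (auto simp: z_def)
  have den: "1-(1-p)*z = p*(1+g-g*p)" by (simp add: z_def algebra_simps)
  have den2: "1+g-g*p > 0" using g gp1 by linarith
  define y where "y = g*(1-p)"
  have y: "0 \<le> y" "y \<le> 1" using g p by (auto simp: y_def mult_le_one)
  have den3: "1+g-g*p = 1 + y" by (simp add: y_def algebra_simps)
  have G: "p*z/(1-(1-p)*z) = z * (1/(1+y))"
    using p den2 by (simp add: den den3)
  have "y - y^2 \<le> ln (1+y)" by (rule ln_one_plus_pos_lower_bound[OF y])
  hence "exp (y - y^2) \<le> exp (ln (1+y))" by simp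
  also have "exp (ln (1+y)) = 1 + y" using y by simp
  finally have "exp (y - y^2) \<le> 1 + y" .
  hence "1/(1+y) \<le> 1/exp (y - y^2)" using y by (intro divide_left_mono) auto
  also have "\<dots> = exp (-(y - y^2))" by (simp only: exp_minus inverse_eq_divide)
  also have "\<dots> \<le> exp (-L)"
  proof -
    have "(1-p)^2 \<le> 1" using p by (simp add: power_le_one)
    hence "g^2*(1-p)^2 \<le> g^2" using g by (intro mult_left_le) auto
    moreover have "y^2 = g^2*(1-p)^2" unfolding y_def power_mult_distrib by simp
    moreover have "y = g - g*p" unfolding y_def by (simp add: algebra_simps)
    ultimately have "-(y - y^2) \<le> -L" unfolding L_def by linarith
    thus ?thesis by simp
  qed
  finally have i1: "1/(1+y) \<le> exp (-L)" .
  have G0: "0 \<le> p*z/(1-(1-p)*z)" unfolding G using z0 y by simp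
  have GL: "p*z/(1-(1-p)*z) \<le> exp (-L)"
  proof -
    have "z * (1/(1+y)) \<le> 1/(1+y)" using z0 y by (intro mult_left_le_one_le) auto
    thus ?thesis unfolding G using i1 by linarith
  qed
  have L0: "0 \<le> L"
  proof -
    have dd: "\<delta>*\<delta> \<le> 1/16" using d mult_mono[of \<delta> "1/4" \<delta> "1/4"] by auto
    have "g*p + g^2 \<le> g*(1/16) + g*(1/16)"
      using g d p dd by (intro add_mono mult_left_mono) (auto simp: power2_eq_square)
    thus ?thesis using g by (simp add: L_def)
  qed
  have "(p*z/(1-(1-p)*z))^m \<le> (exp (-L))^m" by (intro power_mono GL G0)
  also have "\<dots> = exp (real m * (-L))" by (rule exp_of_nat_mult[symmetric])
  also have "\<dots> \<le> exp (real n * p * (1+\<delta>) * (-L))"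
    using m L0 by (intro iffD2[OF exp_le_cancel_iff] mult_right_mono_neg) auto
  finally have num: "(p*z/(1-(1-p)*z))^m \<le> exp (real n * p * (1+\<delta>) * (-L))" .
  have "- (g*p) - 2*(g*p)^2 \<le> ln z" unfolding z_def by (rule ln_one_minus_pos_lower_bound[OF gp0 gp1])
  hence "exp (real n * (- (g*p) - 2*(g*p)^2)) \<le> exp (real n * ln z)"
    by (intro iffD2[OF exp_le_cancel_iff] mult_left_mono) auto
  also have "\<dots> = z^n" using z0 by (simp add: exp_of_nat_mult)
  finally have zn: "exp (real n * (- (g*p) - 2*(g*p)^2)) \<le> z^n" .
  have "(p*z/(1-(1-p)*z))^m / z^n \<le> exp (real n * p * (1+\<delta>) * (-L)) / exp (real n * (- (g*p) - 2*(g*p)^2))"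
    using num zn G0 by (intro frac_le) auto
  also have "\<dots> = exp (real n * p * (-(1+\<delta>) * L + g + 2*g^2*p))"
    by (simp add: exp_diff[symmetric] algebra_simps power2_eq_square)
  also have "\<dots> \<le> exp (- (real n*p) * \<delta>^2/8)"
  proof -
    have e1: "-(1+\<delta>) * L + g + 2*g^2*p = (-\<delta>*g + (1+\<delta>)*g^2) + p*(g*(1+\<delta>) + 2*g^2)"
      by (simp add: L_def algebra_simps power2_eq_square)
    have a1: "-\<delta>*g + (1+\<delta>)*g^2 \<le> -(\<delta>^2/4) + 5*\<delta>^2/64"
    proof -
      have h1: "-\<delta>*g + (1+\<delta>)*g^2 = -(\<delta>*\<delta>)/4 + ((1+\<delta>)*(\<delta>*\<delta>))/16"
        by (simp add: g_def power2_eq_square field_simps)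
      have h2: "(1+\<delta>)*(\<delta>*\<delta>) \<le> (5/4)*(\<delta>*\<delta>)" using d by (intro mult_right_mono) auto
      have h3: "\<delta>^2 = \<delta>*\<delta>" by (simp add: power2_eq_square)
      show ?thesis unfolding h1 h3 using h2 by linarith
    qed
    have a2: "p*(g*(1+\<delta>) + 2*g^2) \<le> p"
    proof -
      have "g*(1+\<delta>) \<le> (1/16)*(5/4)" using g d by (intro mult_mono) auto
      moreover have "g^2 \<le> g" using g unfolding power2_eq_square by (intro mult_left_le_one_le) auto
      ultimately have "g*(1+\<delta>) + 2*g^2 \<le> 1" using g by linarith
      thus ?thesis using p by (simp add: mult_left_le)
    qed
    have "-(1+\<delta>) * L + g + 2*g^2*p \<le> - (\<delta>^2/8)"
      using a1 a2 d unfolding e1 by linarith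
    hence "real n * p * (-(1+\<delta>) * L + g + 2*g^2*p) \<le> real n * p * (- (\<delta>^2/8))"
      using p by (intro mult_left_mono) auto
    thus ?thesis by simp
  qed
  finally show ?thesis by (simp add: z_def g_def)
qed

lemma anC:
  fixes e q x :: real and m :: nat
  assumes e: "0<e" "e\<le>1" and q: "0\<le>q" "q\<le>1" and x: "0 \<le> x"
    and m: "real m \<le> x*(1+e/4) + 1"
  shows "(1-q+q*(1+e/4))^m / (1+e/4) powr (x*q + e*x) \<le> exp (1 - x*e^2/16)"
proof -
  define h where "h = e/4"
  have h: "0 < h" "h \<le> 1/4" using e by (auto simp: h_def)
  have b: "1-q+q*(1+h) = 1 + q*h" by (simp add: algebra_simps)
  have b0: "0 \<le> 1 + q*h" using q h by simp
  have "(1 + q*h)^m \<le> (exp (q*h))^m" using b0 by (intro power_mono) auto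
  also have "\<dots> = exp (real m * (q*h))" by (simp add: exp_of_nat_mult)
  also have "\<dots> \<le> exp ((x*(1+h)+1) * (q*h))"
    using m q h by (intro iffD2[OF exp_le_cancel_iff] mult_right_mono) (auto simp: h_def)
  finally have num: "(1 + q*h)^m \<le> exp ((x*(1+h)+1) * (q*h))" .
  define t where "t = x*q + e*x"
  have t0: "0 \<le> t" using x q e by (simp add: t_def)
  have "h - h^2 \<le> ln (1+h)" by (rule ln_one_plus_pos_lower_bound) (use h in auto)
  hence "exp (t*(h - h^2)) \<le> exp (t * ln (1+h))"
    using t0 by (intro iffD2[OF exp_le_cancel_iff] mult_left_mono) auto
  also have "\<dots> = (1+h) powr t" using h by (simp add: powr_def)
  finally have den: "exp (t*(h - h^2)) \<le> (1+h) powr t" .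
  have "(1 + q*h)^m / (1+h) powr t \<le> exp ((x*(1+h)+1) * (q*h)) / exp (t*(h - h^2))"
    using num den b0 by (intro frac_le) auto
  also have "\<dots> = exp ((x*(1+h)+1) * (q*h) - t*(h - h^2))" by (simp add: exp_diff)
  also have "\<dots> \<le> exp (1 - x*e^2/16)"
  proof -
    have eq: "(x*(1+h)+1) * (q*h) - t*(h - h^2) = 2*x*q*h^2 + q*h - e*x*h + e*x*h^2"
      by (simp add: t_def algebra_simps power2_eq_square)
    have "q*(2*x*h^2) \<le> 2*x*h^2" using q x by (intro mult_left_le_one_le) auto
    hence "2*x*q*h^2 \<le> 2*x*h^2" by (simp add: mult_ac)
    moreover have "q*h \<le> 1" using q h mult_left_le_one_le[of h q] by linarith
    moreover have "e*(x*h^2) \<le> x*h^2" using e x by (intro mult_left_le_one_le) auto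
    moreover have "2*x*h^2 + x*h^2 - e*x*h = - x*e^2/16"
      by (simp add: h_def power2_eq_square field_simps)
    ultimately have "(x*(1+h)+1) * (q*h) - t*(h - h^2) \<le> 1 - x*e^2/16"
      unfolding eq by linarith
    thus ?thesis by simp
  qed
  finally have fin: "(1 + q*h)^m / (1+h) powr t \<le> exp (1 - x*e^2/16)" .
  have b': "1-q+q*(1+e/4) = 1 + q*h" by (simp add: h_def algebra_simps)
  show ?thesis by (subst b') (use fin in \<open>simp add: h_def t_def\<close>)
qed

lemma anD:
  fixes e q x :: real and m :: nat
  assumes e: "0<e" "e\<le>1" and q: "0\<le>q" "q\<le>1" and x: "0 \<le> x"
    and m: "x*(1-e/4) - 1 \<le> real m" and t0: "0 \<le> x*q - e*x"
  shows "(1-q+q*(1-e/4))^m / (1-e/4) powr (x*q - e*x) \<le> exp (1 - x*e^2/16)"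
proof -
  define h where "h = e/4"
  have h: "0 < h" "h \<le> 1/4" using e by (auto simp: h_def)
  have b: "1-q+q*(1-h) = 1 - q*h" by (simp add: algebra_simps)
  have qh: "q*h \<le> 1/4" using q h mult_left_le_one_le[of h q] by linarith
  have b0: "0 \<le> 1 - q*h" using qh by simp
  have "1 - q*h \<le> exp (-(q*h))" using exp_ge_add_one_self[of "-(q*h)"] by simp
  hence "(1 - q*h)^m \<le> (exp (-(q*h)))^m" using b0 by (intro power_mono) auto
  also have "\<dots> = exp (real m * (-(q*h)))" by (rule exp_of_nat_mult[symmetric])
  also have "\<dots> \<le> exp ((x*(1-h)-1) * (-(q*h)))"
    using m q h by (intro iffD2[OF exp_le_cancel_iff] mult_right_mono_neg) (auto simp: h_def)
  finally have num: "(1 - q*h)^m \<le> exp ((x*(1-h)-1) * (-(q*h)))" .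
  define t where "t = x*q - e*x"
  have t0: "0 \<le> t" using t0 by (simp add: t_def)
  have "- h - 2*h^2 \<le> ln (1-h)" by (rule ln_one_minus_pos_lower_bound) (use h in auto)
  hence "exp (t*(- h - 2*h^2)) \<le> exp (t * ln (1-h))"
    using t0 by (intro iffD2[OF exp_le_cancel_iff] mult_left_mono) auto
  also have "\<dots> = (1-h) powr t" using h by (simp add: powr_def)
  finally have den: "exp (t*(- h - 2*h^2)) \<le> (1-h) powr t" .
  have "(1 - q*h)^m / (1-h) powr t \<le> exp ((x*(1-h)-1) * (-(q*h))) / exp (t*(- h - 2*h^2))"
    using num den b0 by (intro frac_le) auto
  also have "\<dots> = exp ((x*(1-h)-1) * (-(q*h)) - t*(- h - 2*h^2))" by (simp add: exp_diff)
  also have "\<dots> \<le> exp (1 - x*e^2/16)"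
  proof -
    have eq: "(x*(1-h)-1) * (-(q*h)) - t*(- h - 2*h^2) = 3*x*q*h^2 + q*h - e*x*h - 2*e*x*h^2"
      by (simp add: t_def algebra_simps power2_eq_square)
    have "q*(3*x*h^2) \<le> 3*x*h^2" using q x by (intro mult_left_le_one_le) auto
    hence "3*x*q*h^2 \<le> 3*x*h^2" by (simp add: mult_ac)
    moreover have "q*h \<le> 1" using qh by simp
    moreover have "0 \<le> e*x*h^2" using e x by simp
    moreover have "3*x*h^2 - e*x*h = - x*e^2/16"
      by (simp add: h_def power2_eq_square field_simps)
    ultimately have "(x*(1-h)-1) * (-(q*h)) - t*(- h - 2*h^2) \<le> 1 - x*e^2/16"
      unfolding eq by linarith
    thus ?thesis by simp
  qed
  finally have fin: "(1 - q*h)^m / (1-h) powr t \<le> exp (1 - x*e^2/16)" .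
  have b': "1-q+q*(1-e/4) = 1 - q*h" by (simp add: h_def algebra_simps)
  show ?thesis by (subst b') (use fin in \<open>simp add: h_def t_def\<close>)
qed

lemma main_bound:
  fixes n :: nat and p \<epsilon> :: real and P :: "nat \<Rightarrow> bool"
  assumes p: "0<p" "p<1" and eps: "\<epsilon> > 0"
    and pe1: "p \<le> (min \<epsilon> 1)^2/512" and pe2: "p * \<epsilon>^2 \<le> (min \<epsilon> 1)^2/64"
  shows "measure_pmf.prob (frag_lengths n p)
      {N. \<bar>real (card {i. i < tp_K n N \<and> P (N i)}) - real n * p * measure_pmf.prob (geom1 p) {v. P v}\<bar> > \<epsilon> * real n * p}
    \<le> 4 * exp (- real n * p\<^sup>2 * \<epsilon>\<^sup>2 / 4)"
proof -
  define q where "q = measure_pmf.prob (geom1 p) {v. P v}"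
  define e where "e = min \<epsilon> 1"
  define x where "x = real n * p"
  define \<delta> where "\<delta> = e/4"
  define M where "M = frag_lengths n p"
  define Bad where "Bad = {N. \<bar>real (card {i. i < tp_K n N \<and> P (N i)}) - real n * p * q\<bar> > \<epsilon> * real n * p}"
  have e: "0 < e" "e \<le> 1" "e \<le> \<epsilon>" using eps by (auto simp: e_def)
  have d: "0 < \<delta>" "\<delta> \<le> 1/4" using e by (auto simp: \<delta>_def)
  have q: "0 \<le> q" "q \<le> 1" by (auto simp: q_def)
  have x0: "0 \<le> x" using p by (simp add: x_def)
  have pe1': "p \<le> e^2/512" using pe1 by (simp add: e_def)
  have pe2': "p * \<epsilon>^2 \<le> e^2/64" using pe2 by (simp add: e_def)
  have e2: "e^2 \<le> 1" using e by (simp add: power_le_one)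
  have psmall: "p \<le> 1/512" using pe1' e2 by linarith
  have dsq: "\<delta>^2 = e^2/16" by (simp add: \<delta>_def power2_eq_square)
  show ?thesis
  proof (cases "1 \<le> 4 * exp (- real n * p\<^sup>2 * \<epsilon>\<^sup>2 / 4)")
    case True
    have "measure_pmf.prob (frag_lengths n p) Bad \<le> 1" by simp
    then show ?thesis using True unfolding Bad_def q_def by linarith
  next
    case False
    define y where "y = real n * p\<^sup>2 * \<epsilon>\<^sup>2 / 4"
    have my: "- real n * p\<^sup>2 * \<epsilon>\<^sup>2 / 4 = -y" by (simp add: y_def)
    have y1: "1 < y"
    proof -
      have "exp (-y) < 1/4" using False unfolding my by simp
      also have "1/4 < exp (-1::real)"
      proof -
        have "exp (-1::real) = 1 / exp 1" by (simp add: exp_minus inverse_eq_divide)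
        moreover have "1/4 < 1 / exp (1::real)" using exp_le by (intro divide_strict_left_mono) auto
        ultimately show ?thesis by simp
      qed
      finally have "exp (-y) < exp (-1)" .
      then show ?thesis by simp
    qed
    have yx: "y \<le> x * e^2/256"
    proof -
      have "y = x * (p * \<epsilon>^2) / 4" by (simp add: y_def x_def power2_eq_square)
      also have "\<dots> \<le> x * (e^2/64) / 4" using pe2' x0 by (intro divide_right_mono mult_left_mono) auto
      finally show ?thesis by simp
    qed
    define a where "a = nat \<lfloor>x*(1-\<delta>)\<rfloor>"
    define b where "b = nat \<lceil>x*(1+\<delta>)\<rceil>"
    have xd0: "0 \<le> x*(1-\<delta>)" using x0 d by simp
    have ra: "real a = of_int \<lfloor>x*(1-\<delta>)\<rfloor>" using xd0 by (simp add: a_def)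
    have a1: "real a \<le> x*(1-\<delta>)" unfolding ra by simp
    have a2: "x*(1-\<delta>) - 1 \<le> real a" unfolding ra by linarith
    have xd1: "0 \<le> x*(1+\<delta>)" using x0 d by simp
    have rb: "real b = of_int \<lceil>x*(1+\<delta>)\<rceil>" using xd1 by (simp add: b_def)
    have b1: "x*(1+\<delta>) \<le> real b" unfolding rb by simp
    have b2: "real b \<le> x*(1+\<delta>) + 1" unfolding rb by linarith
    have xn: "x*(1+\<delta>) \<le> real n"
    proof -
      have "p*(1+\<delta>) \<le> (1/512)*(5/4)" using psmall d p by (intro mult_mono) auto
      hence "p*(1+\<delta>) \<le> 1" by simp
      hence "real n * (p*(1+\<delta>)) \<le> real n * 1" by (intro mult_left_mono) auto
      thus ?thesis by (simp add: x_def mult.assoc)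
    qed
    have bn: "b \<le> n"
    proof -
      have "\<lceil>x*(1+\<delta>)\<rceil> \<le> int n" using xn by (intro ceiling_le) simp
      thus ?thesis by (simp add: b_def nat_le_iff)
    qed
    have an: "a \<le> n"
    proof -
      have "x*(1-\<delta>) \<le> x*(1+\<delta>)" using x0 d by (intro mult_left_mono) auto
      hence "real a \<le> real n" using a1 xn by linarith
      thus ?thesis by simp
    qed
    have supp: "1 \<le> N i" if "N \<in> set_pmf M" for N i
    proof -
      have "N \<in> PiE_dflt {..<n} 1 (set_pmf \<circ> (\<lambda>_. geom1 p))"
        using that by (simp add: M_def frag_lengths_def set_Pi_pmf)
      thus "1 \<le> N i" by (cases "i < n") (auto simp: PiE_dflt_def geom1_def)
    qed
    define EA where "EA = {N. n \<le> (\<Sum>i<a. N i)}"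
    define EB where "EB = {N. (\<Sum>i<b. N i) < n}"
    define EC where "EC = {N. x*q + e*x < real (card {i. i<b \<and> P (N i)})}"
    define ED where "ED = {N. real (card {i. i<a \<and> P (N i)}) < x*q - e*x}"
    have sub: "Bad \<inter> set_pmf M \<subseteq> EA \<union> EB \<union> EC \<union> ED"
    proof
      fix N assume N: "N \<in> Bad \<inter> set_pmf M"
      show "N \<in> EA \<union> EB \<union> EC \<union> ED"
      proof (rule ccontr)
        assume "N \<notin> EA \<union> EB \<union> EC \<union> ED"
        hence nA: "(\<Sum>i<a. N i) < n" and nB: "n \<le> (\<Sum>i<b. N i)"
          and nC: "real (card {i. i<b \<and> P (N i)}) \<le> x*q + e*x"
          and nD: "x*q - e*x \<le> real (card {i. i<a \<and> P (N i)})"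
          by (auto simp: EA_def EB_def EC_def ED_def)
        have N1: "\<And>i. 1 \<le> N i" using N supp by auto
        define K where "K = tp_K n N"
        have realsum: "\<And>m. (\<Sum>i<m. real (N i)) = real (\<Sum>i<m. N i)" by simp
        have Kb: "K \<le> b"
          unfolding K_def tp_K_def
        proof (rule Least_le)
          show "real n \<le> (\<Sum>i<b. real (N i))" using nB by (simp only: realsum of_nat_le_iff)
        qed
        have ex: "real n \<le> (\<Sum>i<n. real (N i))"
        proof -
          have "(\<Sum>i<n. (1::real)) \<le> (\<Sum>i<n. real (N i))" using N1 by (intro sum_mono) auto
          thus ?thesis by simp
        qed
        have SK: "real n \<le> (\<Sum>i<K. real (N i))"
          unfolding K_def tp_K_def by (rule LeastI[of _ n]) (rule ex)
        hence SK': "n \<le> (\<Sum>i<K. N i)" by (simp only: realsum of_nat_le_iff)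
        have aK: "a \<le> K"
        proof (rule ccontr)
          assume "\<not> a \<le> K"
          hence "(\<Sum>i<K. N i) \<le> (\<Sum>i<a. N i)" by (intro sum_mono2) auto
          with SK' nA show False by linarith
        qed
        have cA: "card {i. i<a \<and> P (N i)} \<le> card {i. i<K \<and> P (N i)}"
          using aK by (intro card_mono) auto
        have cB: "card {i. i<K \<and> P (N i)} \<le> card {i. i<b \<and> P (N i)}"
          using Kb by (intro card_mono) auto
        have cA': "real (card {i. i<a \<and> P (N i)}) \<le> real (card {i. i<K \<and> P (N i)})" using cA by simp
        have cB': "real (card {i. i<K \<and> P (N i)}) \<le> real (card {i. i<b \<and> P (N i)})" using cB by simp
        have "\<bar>real (card {i. i < K \<and> P (N i)}) - x*q\<bar> \<le> e*x"
          using cA' cB' nC nD by (auto simp: abs_le_iff)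
        also have "e*x \<le> \<epsilon>*x" using e x0 by (intro mult_right_mono) auto
        finally have "\<bar>real (card {i. i < K \<and> P (N i)}) - x*q\<bar> \<le> \<epsilon>*x" .
        moreover have "N \<in> Bad" using N by auto
        ultimately show False by (simp add: Bad_def K_def x_def mult.assoc)
      qed
    qed
    have un: "\<And>A B. measure_pmf.prob M (A \<union> B) \<le> measure_pmf.prob M A + measure_pmf.prob M B"
      by (rule measure_subadditive) (auto simp: measure_pmf.emeasure_eq_measure)
    have "measure_pmf.prob M Bad = measure_pmf.prob M (Bad \<inter> set_pmf M)" by (simp add: measure_Int_set_pmf)
    also have "\<dots> \<le> measure_pmf.prob M (EA \<union> EB \<union> EC \<union> ED)" by (intro measure_pmf.finite_measure_mono sub) auto
    also have "\<dots> \<le> measure_pmf.prob M EA + measure_pmf.prob M EB + measure_pmf.prob M EC + measure_pmf.prob M ED"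
      using un[of "EA \<union> EB \<union> EC" ED] un[of "EA \<union> EB" EC] un[of EA EB] by linarith
    also have "\<dots> \<le> exp (- x * (e^2/128)) + exp (- x * (e^2/128)) + exp (1 - x*e^2/16) + exp (1 - x*e^2/16)"
    proof (intro add_mono)
      have z1: "1 < 1+\<delta>/2*p" using d p by simp
      have z2: "(1-p)*(1+\<delta>/2*p) < 1"
      proof -
        have "\<delta>/2*p < p" using d p by simp
        moreover have "0 \<le> \<delta>/2*p*p" using d p by simp
        moreover have "(1-p)*(1+\<delta>/2*p) = 1 - (p - \<delta>/2*p) - \<delta>/2*p*p" by (simp add: field_simps)
        ultimately show ?thesis by linarith
      qed
      have "measure_pmf.prob M EA \<le> (p*(1+\<delta>/2*p)/(1-(1-p)*(1+\<delta>/2*p)))^a / (1+\<delta>/2*p)^n"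
        unfolding M_def EA_def by (rule tail_S_ge[OF p an z1 z2])
      also have "\<dots> \<le> exp (- (real n*p) * \<delta>^2/8)"
      proof (rule anA[OF p d])
        show "p \<le> \<delta>^2/8" using pe1' dsq zero_le_power2[of \<delta>] by linarith
        show "real a \<le> real n * p * (1-\<delta>)" using a1 by (simp add: x_def)
      qed
      also have "\<dots> = exp (- x * (e^2/128))" by (simp add: x_def dsq)
      finally show "measure_pmf.prob M EA \<le> exp (- x * (e^2/128))" .
    next
      have "\<delta>*p \<le> (1/4)*1" using d p by (intro mult_mono) auto
      hence z1: "0 < 1-\<delta>/4*p" "1-\<delta>/4*p < 1" using d p by auto
      have "measure_pmf.prob M EB \<le> (p*(1-\<delta>/4*p)/(1-(1-p)*(1-\<delta>/4*p)))^b / (1-\<delta>/4*p)^n"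
        unfolding M_def EB_def by (rule tail_S_lt[OF p bn z1])
      also have "\<dots> \<le> exp (- (real n*p) * \<delta>^2/8)"
      proof (rule anB[OF p d])
        show "p \<le> 3*\<delta>^2/64" using pe1' dsq zero_le_power2[of \<delta>] by linarith
        show "real n * p * (1+\<delta>) \<le> real b" using b1 by (simp add: x_def)
      qed
      also have "\<dots> = exp (- x * (e^2/128))" by (simp add: x_def dsq)
      finally show "measure_pmf.prob M EB \<le> exp (- x * (e^2/128))" .
    next
      have "measure_pmf.prob M EC \<le> (1 - q + q*(1+e/4))^b / (1+e/4) powr (x*q + e*x)"
        unfolding M_def EC_def q_def by (rule tail_T_gt[OF bn]) (use e in simp)
      also have "\<dots> \<le> exp (1 - x*e^2/16)"
        by (rule anC[OF e(1,2) q x0]) (use b2 in \<open>simp add: \<delta>_def\<close>)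
      finally show "measure_pmf.prob M EC \<le> exp (1 - x*e^2/16)" .
    next
      show "measure_pmf.prob M ED \<le> exp (1 - x*e^2/16)"
      proof (cases "0 \<le> x*q - e*x")
        case True
        have "measure_pmf.prob M ED \<le> (1 - q + q*(1-e/4))^a / (1-e/4) powr (x*q - e*x)"
          unfolding M_def ED_def q_def by (rule tail_T_lt[OF an]) (use e in simp_all)
        also have "\<dots> \<le> exp (1 - x*e^2/16)"
          by (rule anD[OF e(1,2) q x0 _ True]) (use a2 in \<open>simp add: \<delta>_def\<close>)
        finally show ?thesis .
      next
        case False
        hence "ED = {}" by (auto simp: ED_def)
        thus ?thesis by simp
      qed
    qed
    also have "\<dots> \<le> 4 * exp (1 - x * e^2/128)"
    proof -
      have "exp (- x * (e^2/128)) \<le> exp (1 - x * e^2/128)" by simp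
      moreover have "exp (1 - x*e^2/16) \<le> exp (1 - x * e^2/128)"
        using x0 by (simp add: mult_nonneg_nonneg)
      ultimately show ?thesis by linarith
    qed
    also have "\<dots> \<le> 4 * exp (-y)"
      using yx y1 by simp
    finally show ?thesis unfolding my by (simp add: M_def Bad_def q_def)
  qed
qed

lemma p_small:
  fixes p :: "nat \<Rightarrow> real" and c :: real
  assumes "(\<lambda>n. p n * log 2 (real n)) \<longlonglongrightarrow> \<alpha>" "c > 0"
  shows "\<forall>\<^sub>F n in sequentially. p n < c"
proof -
  define T where "T = (\<bar>\<alpha>\<bar> + 1) / c"
  have T0: "0 < T" using assms(2) by (simp add: T_def add_pos_nonneg)
  have ev1: "\<forall>\<^sub>F n in sequentially. p n * log 2 (real n) < \<bar>\<alpha>\<bar> + 1"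
    by (rule order_tendstoD(2)[OF assms(1)]) simp
  have ev2: "\<forall>\<^sub>F n in sequentially. 2 powr T \<le> real n"
    using eventually_ge_at_top[of "nat \<lceil>2 powr T\<rceil>"]
  proof eventually_elim
    case (elim n)
    have "2 powr T \<le> real (nat \<lceil>2 powr T\<rceil>)" by (rule real_nat_ceiling_ge)
    also have "\<dots> \<le> real n" using elim by (simp only: of_nat_le_iff)
    finally show ?case .
  qed
  show ?thesis using ev1 ev2
  proof eventually_elim
    case (elim n)
    have np: "0 < real n" using elim(2) powr_gt_zero[of 2 T] by linarith
    have "T = log 2 (2 powr T)" by simp
    also have "\<dots> \<le> log 2 (real n)" using elim(2) np by (subst log_le_cancel_iff) auto
    finally have Tl: "T \<le> log 2 (real n)" .
    show ?case
    proof (rule ccontr)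
      assume "\<not> p n < c"
      hence pc: "c \<le> p n" by simp
      have "c * T \<le> p n * log 2 (real n)" using pc Tl T0 assms(2) by (intro mult_mono) auto
      moreover have "c * T = \<bar>\<alpha>\<bar> + 1" using assms(2) by (simp add: T_def)
      ultimately show False using elim(1) by linarith
    qed
  qed
qed

theorem lemma1:
  fixes p :: "nat \<Rightarrow> real" and \<alpha> :: real and L k :: nat and \<epsilon> :: real
  assumes "\<And>n. 0 < p n \<and> p n < 1"
    and "(\<lambda>n. p n * log 2 (real n)) \<longlonglongrightarrow> \<alpha>"
    and "L > 0" and "k > 0" and "\<epsilon> > 0"
  shows "\<forall>\<^sub>F n in sequentially.
    measure_pmf.prob (frag_lengths n (p n))
      {N. \<bar>real (count_Yk n L k N) - real n * p n * q_kn L k n (p n)\<bar> > \<epsilon> * real n * p n}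
    \<le> 4 * exp (- real n * (p n)\<^sup>2 * \<epsilon>\<^sup>2 / 4)"
proof -
  define e where "e = min \<epsilon> 1"
  have e: "0 < e" using assms(5) by (simp add: e_def)
  have ev1: "\<forall>\<^sub>F n in sequentially. p n < e^2/512"
    by (rule p_small[OF assms(2)]) (use e in simp)
  have ev2: "\<forall>\<^sub>F n in sequentially. p n < e^2/64/\<epsilon>^2"
    by (rule p_small[OF assms(2)]) (use e assms(5) in simp)
  have ev3: "\<forall>\<^sub>F n in sequentially. 2 \<le> n" by (rule eventually_ge_at_top)
  show ?thesis using ev1 ev2 ev3
  proof eventually_elim
    case (elim n)
    define P where "P = (\<lambda>v::nat. (real k - 1) / real L * log 2 (real n) \<le> real v \<and> real v < real k / real L * log 2 (real n))"
    have lg: "0 < log 2 (real n)" using elim(3) by simp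
    have cnt: "\<And>N. count_Yk n L k N = card {i. i < tp_K n N \<and> P (N i)}" by (simp add: count_Yk_def P_def)
    have set_eq: "{m. (real k - 1) / real L \<le> real m / log 2 (real n) \<and> real m / log 2 (real n) < real k / real L} = {v. P v}"
      using lg by (auto simp: P_def le_divide_eq divide_less_eq)
    have qq: "q_kn L k n (p n) = measure_pmf.prob (geom1 (p n)) {v. P v}"
      unfolding q_kn_def set_eq ..
    have p1: "0 < p n" "p n < 1" using assms(1) by auto
    have pe1: "p n \<le> (min \<epsilon> 1)^2/512" using elim(1) by (simp add: e_def)
    have pe2: "p n * \<epsilon>^2 \<le> (min \<epsilon> 1)^2/64"
    proof -
      have "p n * \<epsilon>^2 < e^2/64/\<epsilon>^2 * \<epsilon>^2" using elim(2) assms(5) by (intro mult_strict_right_mono) auto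
      also have "\<dots> = e^2/64" using assms(5) by simp
      finally show ?thesis by (simp add: e_def)
    qed
    show ?case unfolding cnt qq by (rule main_bound[OF p1 assms(5) pe1 pe2])
  qed
qed

end
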